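(* Let $d>0$, $a\geq 7$ be integers with $\gcd(a,d)=1$, $\Gamma_4=\langle a,2a+d,3a+3d,4a+6d\rangle$ and $M=\Gamma_4\setminus\{0\}$. For $0\leq t\leq a-1$ let $(\mu_t,\nu_t,\xi_t)$ be as in the context, and for $s\geq 0$ let $\omega_{s,t}$ be as in the context. Then for all $0\leq t\leq a-1$ and $0\leq s\leq \lfloor a/6\rfloor+2$: $$\omega_{s,t}=\begin{cases}(4\mu_t+3\nu_t+2\xi_t)a+td & \text{if } 0\leq s\leq \mu_t+\nu_t+\xi_t,\\ (3\mu_t+2\nu_t+\xi_t+s)a+td & \text{if } \mu_t+\nu_t+\xi_t< s\leq \lfloor a/6\rfloor+2,\end{cases}$$ so the Apéry table has $\lfloor a/6\rfloor+3$ rows (indexed $s=0,\dots,\lfloor a/6\rfloor+2$) and $a$ columns. Moreover, the reduction number of the maximal ideal $\mathfrak{m}$ of $k[[t^a,t^{2a+d},t^{3a+3d},t^{4a+6d}]]$ with respect to $(t^a)$, i.e. the least $r$ such that $(n+1)M=a+nM$ for all $n\geq r$, equals $\lfloor a/6\rfloor+2$.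
   Context: For $1\leq i\leq a-1$ write $i=6\mu_i+q_i$ with $0\leq q_i<6$, set $(\nu_i,\xi_i)=(1,q_i-3)$ if $q_i\geq3$ and $(\nu_i,\xi_i)=(0,q_i)$ if $q_i<3$; set $(\mu_0,\nu_0,\xi_0)=(0,0,0)$. For $n\geq1$, $nM=M+\cdots+M$ ($n$ copies). The Apéry table entries are: $\omega_{0,t}=(4\mu_t+3\nu_t+2\xi_t)a+td$ (the element of $\mathrm{Ap}(\Gamma_4,a)$ congruent to $td$ mod $a$, with $\omega_{0,0}=0$), and for $s\geq1$, $\omega_{s,t}$ is the smallest element of $sM$ congruent to $td$ modulo $a$ (equivalently $\mathrm{Ap}(sM)=sM\setminus(a+sM)=\{\omega_{s,0},\dots,\omega_{s,a-1}\}$). *)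

theory Defs
  imports Main
begin

definition Gamma4 :: "nat \<Rightarrow> nat \<Rightarrow> nat set" where
  "Gamma4 a d = {x. \<exists>c1 c2 c3 c4::nat.
      x = c1 * a + c2 * (2*a + d) + c3 * (3*a + 3*d) + c4 * (4*a + 6*d)}"

definition Mset :: "nat \<Rightarrow> nat \<Rightarrow> nat set" where
  "Mset a d = Gamma4 a d - {0}"

fun sumsetM :: "nat \<Rightarrow> nat \<Rightarrow> nat \<Rightarrow> nat set" where
  "sumsetM a d 0 = {0}"
| "sumsetM a d (Suc n) = {x + y | x y. x \<in> Mset a d \<and> y \<in> sumsetM a d n}"

definition mu :: "nat \<Rightarrow> nat" where "mu i = i div 6"
definition nu :: "nat \<Rightarrow> nat" where "nu i = (if i mod 6 \<ge> 3 then 1 else 0)"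
definition xi :: "nat \<Rightarrow> nat" where
  "xi i = (if i mod 6 \<ge> 3 then i mod 6 - 3 else i mod 6)"

definition omega :: "nat \<Rightarrow> nat \<Rightarrow> nat \<Rightarrow> nat \<Rightarrow> nat" where
  "omega a d s t = (if s = 0
     then (LEAST x. x \<in> Gamma4 a d \<and> x mod a = (t*d) mod a)
     else (LEAST x. x \<in> sumsetM a d s \<and> x mod a = (t*d) mod a))"

definition reduction_number :: "nat \<Rightarrow> nat \<Rightarrow> nat" where
  "reduction_number a d = (LEAST r. \<forall>n\<ge>r.
      sumsetM a d (Suc n) = (\<lambda>x. a + x) ` sumsetM a d n)"

end

theory Submission
  imports Defs "HOL-Number_Theory.Cong"
begin

definition ff :: "nat \<Rightarrow> nat" where "ff T = 4*mu T + 3*nu T + 2*xi T"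
definition hh :: "nat \<Rightarrow> nat" where "hh T = 3*mu T + 2*nu T + xi T"
lemmas D = ff_def hh_def mu_def nu_def xi_def

lemma r6: "(r::nat) < 6 \<Longrightarrow> r = 0 \<or> r = 1 \<or> r = 2 \<or> r = 3 \<or> r = 4 \<or> r = 5" by arith

lemma S1: "T + 1 = Suc T" "T + 3 = Suc (Suc (Suc T))" by simp_all

lemma ff1: "ff (T+1) \<le> ff T + 2"
  using r6[of "T mod 6"] unfolding S1 D by (auto simp: div_Suc mod_Suc)
lemma ff3: "ff (T+3) \<le> ff T + 3"
  using r6[of "T mod 6"] unfolding S1 D by (auto simp: div_Suc mod_Suc)
lemma ff6: "ff (T+6) = ff T + 4" unfolding D by (simp add: div_add_self2 mod_add_self2)
lemma hh1: "hh (T+1) \<le> hh T + 1"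
  using r6[of "T mod 6"] unfolding S1 D by (auto simp: div_Suc mod_Suc)
lemma hh3: "hh (T+3) \<le> hh T + 2"
  using r6[of "T mod 6"] unfolding S1 D by (auto simp: div_Suc mod_Suc)
lemma hh6: "hh (T+6) = hh T + 3" unfolding D by (simp add: div_add_self2 mod_add_self2)
lemma ffb: "2*T \<le> 3*ff T \<and> 3*ff T \<le> 2*T + 11"
proof -
  obtain q r where "T div 6 = q" "T mod 6 = r" by blast
  moreover have "T = 6*(T div 6) + T mod 6" by simp
  ultimately show ?thesis using r6[of "T mod 6"] unfolding D by auto
qed
lemma hhb: "T \<le> 2*hh T \<and> 2*hh T \<le> T + 3"
proof -
  obtain q r where "T div 6 = q" "T mod 6 = r" by blast
  moreover have "T = 6*(T div 6) + T mod 6" by simp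
  ultimately show ?thesis using r6[of "T mod 6"] unfolding D by auto
qed
lemma ffhh: "ff T = hh T + mu T + nu T + xi T" unfolding ff_def hh_def by simp
lemma Tdec: "T = xi T + 3*nu T + 6*mu T"
proof -
  obtain q r where "T div 6 = q" "T mod 6 = r" by blast
  moreover have "T = 6*(T div 6) + T mod 6" by simp
  ultimately show ?thesis using r6[of "T mod 6"] unfolding D by auto
qed
lemma big: "mu T + nu T + xi T \<ge> a div 6 + 3 \<Longrightarrow> a \<le> T"
proof -
  assume h: "mu T + nu T + xi T \<ge> a div 6 + 3"
  obtain q r p s where qr: "T div 6 = q" "T mod 6 = r" "a div 6 = p" "a mod 6 = s" by blast
  have e: "T = 6*q+r" "a = 6*p+s" using qr by (metis div_mult_mod_eq mult.commute)+
  have rs: "r < 6" "s < 6" using qr by auto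
  have "mu T = q" "nu T = (if 3 \<le> r then 1 else 0)"
     "xi T = (if 3 \<le> r then r - 3 else r)" unfolding D using qr by simp_all
  then have "p + 3 \<le> q + (if 3 \<le> r then 1 else 0) + (if 3 \<le> r then r - 3 else r)" using h qr by simp
  then show ?thesis unfolding e using rs by (simp split: if_splits)
qed
lemma t0: "a \<ge> 7 \<Longrightarrow> 6*(a div 6) - 1 < a \<and> mu (6*(a div 6) - 1) + nu (6*(a div 6) - 1) + xi (6*(a div 6) - 1) = a div 6 + 2"
proof -
  assume a: "a \<ge> 7"
  have "6 div 6 \<le> a div 6" using a by (intro div_le_mono) simp
  then have "a div 6 \<noteq> 0" by simp
  then obtain p where p: "a div 6 = Suc p" using not0_implies_Suc by blast
  have e: "6*(a div 6) - 1 = 6*p + 5" using p by simp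
  have "a = 6*(a div 6) + a mod 6" by simp
  then show ?thesis unfolding e using p unfolding D by simp
qed
lemma ff_rep: "ff (c2 + 3*c3 + 6*c4) \<le> 2*c2 + 3*c3 + 4*c4"
proof -
  have a: "ff (6*c4) = 4*c4" proof (induction c4)
    case 0 then show ?case by (simp add: ff_def mu_def nu_def xi_def)
  next case (Suc n) then show ?case using ff6[of "6*n"] by (simp add: add.commute)
  qed
  have b: "ff (3*c3 + X) \<le> 3*c3 + ff X" for X proof (induction c3)
    case 0 then show ?case by simp
  next case (Suc n) then show ?case using ff3[of "3*n+X"] by (simp add: algebra_simps)
  qed
  have c: "ff (c2 + X) \<le> 2*c2 + ff X" for X proof (induction c2)
    case 0 then show ?case by simp
  next case (Suc n) then show ?case using ff1[of "n+X"] by (simp add: algebra_simps)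
  qed
  show ?thesis using a b[of "6*c4"] c[of "3*c3+6*c4"] by (simp add: add.assoc)
qed

lemma hh_rep: "hh (c2 + 3*c3 + 6*c4) \<le> c2 + 2*c3 + 3*c4"
proof -
  have a: "hh (6*c4) = 3*c4" proof (induction c4)
    case 0 then show ?case by (simp add: hh_def mu_def nu_def xi_def)
  next case (Suc n) then show ?case using hh6[of "6*n"] by (simp add: add.commute)
  qed
  have b: "hh (3*c3 + X) \<le> 2*c3 + hh X" for X proof (induction c3)
    case 0 then show ?case by simp
  next case (Suc n) then show ?case using hh3[of "3*n+X"] by (simp add: algebra_simps)
  qed
  have c: "hh (c2 + X) \<le> c2 + hh X" for X proof (induction c2)
    case 0 then show ?case by simp
  next case (Suc n) then show ?case using hh1[of "n+X"] by (simp add: algebra_simps)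
  qed
  show ?thesis using a b[of "6*c4"] c[of "3*c3+6*c4"] by (simp add: add.assoc)
qed

definition inS :: "nat \<Rightarrow> nat \<Rightarrow> nat \<Rightarrow> nat \<Rightarrow> bool" where
  "inS a d N x \<longleftrightarrow> (\<exists>c1 c2 c3 c4::nat.
      x = c1 * a + c2 * (2*a + d) + c3 * (3*a + 3*d) + c4 * (4*a + 6*d) \<and> N \<le> c1+c2+c3+c4)"

lemma rep_AT: "(c1::nat) * a + c2 * (2*a + d) + c3 * (3*a + 3*d) + c4 * (4*a + 6*d)
   = (c1 + 2*c2 + 3*c3 + 4*c4) * a + (c2 + 3*c3 + 6*c4) * d"
  by (simp add: algebra_simps)

lemma inS_iff: "inS a d N x \<longleftrightarrow> (\<exists>A T. x = A*a + T*d \<and> ff T \<le> A \<and> N + hh T \<le> A)"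
proof
  assume "inS a d N x"
  then obtain c1 c2 c3 c4 where x: "x = c1 * a + c2 * (2*a + d) + c3 * (3*a + 3*d) + c4 * (4*a + 6*d)"
    and N: "N \<le> c1+c2+c3+c4" unfolding inS_def by blast
  show "\<exists>A T. x = A*a + T*d \<and> ff T \<le> A \<and> N + hh T \<le> A"
    apply (rule exI[of _ "c1 + 2*c2 + 3*c3 + 4*c4"], rule exI[of _ "c2 + 3*c3 + 6*c4"])
    using x N ff_rep[of c2 c3 c4] hh_rep[of c2 c3 c4] rep_AT by auto
next
  assume "\<exists>A T. x = A*a + T*d \<and> ff T \<le> A \<and> N + hh T \<le> A"
  then obtain A T where x: "x = A*a + T*d" and f: "ff T \<le> A" and h: "N + hh T \<le> A" by blast
  have e1: "T = xi T + 3*nu T + 6*mu T" by (rule Tdec)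
  have e2: "ff T = 2 * xi T + 3*nu T + 4*mu T" by (simp add: ff_def)
  have e3: "ff T = hh T + mu T + nu T + xi T" by (rule ffhh)
  define c1 where "c1 = A - ff T"
  have c1A: "c1 + 2 * xi T + 3*nu T + 4*mu T = A" using f e2 unfolding c1_def by simp
  have xx: "x = (c1 + 2 * xi T + 3*nu T + 4*mu T) * a + (xi T + 3*nu T + 6*mu T) * d"
    using x c1A e1 by simp
  have cnt: "N \<le> c1 + xi T + nu T + mu T" using h f e3 unfolding c1_def by linarith
  show "inS a d N x" unfolding inS_def
    apply (rule exI[of _ c1], rule exI[of _ "xi T"], rule exI[of _ "nu T"], rule exI[of _ "mu T"])
    apply (subst rep_AT)
    using xx cnt by simp
qed

lemma inS_add: "inS a d m x \<Longrightarrow> inS a d n y \<Longrightarrow> inS a d (m+n) (x+y)"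
proof -
  assume "inS a d m x" "inS a d n y"
  then obtain c1 c2 c3 c4 e1 e2 e3 e4 where
    "x = c1 * a + c2 * (2*a + d) + c3 * (3*a + 3*d) + c4 * (4*a + 6*d)" "m \<le> c1+c2+c3+c4"
    "y = e1 * a + e2 * (2*a + d) + e3 * (3*a + 3*d) + e4 * (4*a + 6*d)" "n \<le> e1+e2+e3+e4"
    unfolding inS_def by blast
  then show ?thesis unfolding inS_def
    by (intro exI[of _ "c1+e1"] exI[of _ "c2+e2"] exI[of _ "c3+e3"] exI[of _ "c4+e4"]) (simp add: algebra_simps)
qed

lemma inS_split: "inS a d (Suc n) z \<Longrightarrow> \<exists>x y. z = x + y \<and> inS a d 1 x \<and> inS a d n y"
proof -
  assume "inS a d (Suc n) z"
  then obtain c1 c2 c3 c4 where z: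
    "z = c1 * a + c2 * (2*a + d) + c3 * (3*a + 3*d) + c4 * (4*a + 6*d)" and N: "Suc n \<le> c1+c2+c3+c4"
    unfolding inS_def by blast
  have g1: "inS a d 1 a" unfolding inS_def by (intro exI[of _ 1] exI[of _ 0]) simp
  have g2: "inS a d 1 (2*a+d)" unfolding inS_def by (intro exI[of _ 0] exI[of _ 1] exI[of _ 0]) simp
  have g3: "inS a d 1 (3*a+3*d)" unfolding inS_def by (intro exI[of _ 0] exI[of _ 0] exI[of _ 1] exI[of _ 0]) simp
  have g4: "inS a d 1 (4*a+6*d)" unfolding inS_def by (intro exI[of _ 0] exI[of _ 0] exI[of _ 0] exI[of _ 1]) simp
  consider k where "c1 = Suc k" | k where "c2 = Suc k" | k where "c3 = Suc k" | k where "c4 = Suc k"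
  proof -
    have "c1 \<noteq> 0 \<or> c2 \<noteq> 0 \<or> c3 \<noteq> 0 \<or> c4 \<noteq> 0" using N by auto
    then show ?thesis using that not0_implies_Suc by blast
  qed
  then show ?thesis
  proof cases
    case (1 k)
    have "inS a d n (k * a + c2 * (2*a + d) + c3 * (3*a + 3*d) + c4 * (4*a + 6*d))"
      unfolding inS_def using N 1 by (intro exI[of _ k] exI[of _ c2] exI[of _ c3] exI[of _ c4]) simp
    moreover have "z = (a) + (k * a + c2 * (2*a + d) + c3 * (3*a + 3*d) + c4 * (4*a + 6*d))" using z 1 by simp
    ultimately show ?thesis using g1 by blast
  next
    case (2 k)
    have "inS a d n (c1 * a + k * (2*a + d) + c3 * (3*a + 3*d) + c4 * (4*a + 6*d))"
      unfolding inS_def using N 2 by (intro exI[of _ c1] exI[of _ k] exI[of _ c3] exI[of _ c4]) simp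
    moreover have "z = (2*a+d) + (c1 * a + k * (2*a + d) + c3 * (3*a + 3*d) + c4 * (4*a + 6*d))" using z 2 by simp
    ultimately show ?thesis using g2 by blast
  next
    case (3 k)
    have "inS a d n (c1 * a + c2 * (2*a + d) + k * (3*a + 3*d) + c4 * (4*a + 6*d))"
      unfolding inS_def using N 3 by (intro exI[of _ c1] exI[of _ c2] exI[of _ k] exI[of _ c4]) simp
    moreover have "z = (3*a+3*d) + (c1 * a + c2 * (2*a + d) + k * (3*a + 3*d) + c4 * (4*a + 6*d))" using z 3 by simp
    ultimately show ?thesis using g3 by blast
  next
    case (4 k)
    have "inS a d n (c1 * a + c2 * (2*a + d) + c3 * (3*a + 3*d) + k * (4*a + 6*d))"
      unfolding inS_def using N 4 by (intro exI[of _ c1] exI[of _ c2] exI[of _ c3] exI[of _ k]) simp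
    moreover have "z = (4*a+6*d) + (c1 * a + c2 * (2*a + d) + c3 * (3*a + 3*d) + k * (4*a + 6*d))" using z 4 by simp
    ultimately show ?thesis using g4 by blast
  qed
qed

lemma Gamma_iff: "x \<in> Gamma4 a d \<longleftrightarrow> inS a d 0 x"
  unfolding Gamma4_def inS_def by simp

lemma Mset_iff: assumes "a > 0" shows "x \<in> Mset a d \<longleftrightarrow> inS a d 1 x"
proof
  assume "x \<in> Mset a d"
  then obtain c1 c2 c3 c4 where x: "x = c1 * a + c2 * (2*a + d) + c3 * (3*a + 3*d) + c4 * (4*a + 6*d)"
    and "x \<noteq> 0" unfolding Mset_def Gamma4_def by auto
  then have "1 \<le> c1+c2+c3+c4" by (cases "c1+c2+c3+c4 = 0") auto
  then show "inS a d 1 x" using x unfolding inS_def by blast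
next
  assume "inS a d 1 x"
  then obtain c1 c2 c3 c4 where x: "x = c1 * a + c2 * (2*a + d) + c3 * (3*a + 3*d) + c4 * (4*a + 6*d)"
    and N: "1 \<le> c1+c2+c3+c4" unfolding inS_def by blast
  have "x \<noteq> 0" using x N assms by auto
  then show "x \<in> Mset a d" unfolding Mset_def Gamma4_def using x by blast
qed

lemma sumsetM_eq: assumes "a > 0" shows "sumsetM a d (Suc n) = {x. inS a d (Suc n) x}"
proof (induction n)
  case 0
  show ?case using Mset_iff[OF assms] by auto
next
  case (Suc n)
  have "sumsetM a d (Suc (Suc n)) = {x + y |x y. x \<in> Mset a d \<and> inS a d (Suc n) y}"
    using Suc by simp
  also have "\<dots> = {x. inS a d (Suc (Suc n)) x}"
  proof (intro set_eqI iffI)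
    fix z assume "z \<in> {x + y |x y. x \<in> Mset a d \<and> inS a d (Suc n) y}"
    then show "z \<in> {x. inS a d (Suc (Suc n)) x}" using inS_add[of a d 1 _ "Suc n"] Mset_iff[OF assms] by auto
  next
    fix z assume "z \<in> {x. inS a d (Suc (Suc n)) x}"
    then show "z \<in> {x + y |x y. x \<in> Mset a d \<and> inS a d (Suc n) y}"
      using inS_split[of a d "Suc n" z] Mset_iff[OF assms] by blast
  qed
  finally show ?case .
qed

lemma sumsetM_eq': assumes "a > 0" "n > 0" shows "x \<in> sumsetM a d n \<longleftrightarrow> inS a d n x"
  using sumsetM_eq[OF assms(1), of d "n - 1"] assms(2) by simp

declare sumsetM.simps(2)[simp del]

definition FF :: "nat \<Rightarrow> nat \<Rightarrow> nat \<Rightarrow> nat \<Rightarrow> nat" where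
  "FF a d s t = max (ff t) (s + hh t) * a + t * d"

lemma LB:
  assumes a7: "a \<ge> 7" and cop: "coprime a d" and t: "t < a" and x: "inS a d s x"
    and m: "x mod a = (t*d) mod a"
  shows "FF a d s t \<le> x"
proof -
  obtain A T where xe: "x = A*a + T*d" and f: "ff T \<le> A" and h: "s + hh T \<le> A"
    using x inS_iff by blast
  have "(T*d) mod a = (t*d) mod a" using m xe by simp
  then have "[T*d = t*d] (mod a)" by (simp add: cong_def)
  then have "[T = t] (mod a)" using cop cong_mult_rcancel_nat[of d a T t] by (simp add: coprime_commute)
  then have Tm: "T mod a = t" using t by (simp add: cong_def)
  have "T = t \<or> T \<ge> t + a"
  proof (cases "T div a = 0")
    case True then show ?thesis using Tm by (metis add_0 div_mult_mod_eq mult_0)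
  next
    case False then have "T div a * a \<ge> a" by simp
    then show ?thesis using Tm by (metis add.commute add_le_cancel_left div_mult_mod_eq)
  qed
  then have tT: "T = t \<or> T \<ge> t + 7" using a7 by auto
  have ft: "ff t \<le> ff T" using tT ffb[of t] ffb[of T] by auto
  have ht: "hh t \<le> hh T" using tT hhb[of t] hhb[of T] by auto
  have "max (ff t) (s + hh t) \<le> A" using f h ft ht by simp
  then have "max (ff t) (s + hh t) * a \<le> A * a" by simp
  moreover have "t * d \<le> T * d" using tT by auto
  ultimately show ?thesis unfolding FF_def xe by linarith
qed

lemma FF_in: "inS a d s (FF a d s t)"
  unfolding FF_def inS_iff by (intro exI[of _ "max (ff t) (s + hh t)"] exI[of _ t]) auto

lemma FF_mod: "FF a d s t mod a = (t*d) mod a"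
  unfolding FF_def by simp

lemma omega_FF:
  assumes a7: "a \<ge> 7" and cop: "coprime a d" and t: "t < a"
  shows "omega a d s t = FF a d s t"
proof -
  have a0: "a > 0" using a7 by simp
  have "omega a d s t = (LEAST x. inS a d s x \<and> x mod a = (t*d) mod a)"
    unfolding omega_def using Gamma_iff sumsetM_eq'[OF a0] by auto
  also have "\<dots> = FF a d s t"
    by (rule Least_equality) (use FF_in FF_mod LB[OF a7 cop t] in auto)
  finally show ?thesis .
qed


lemma FF_formula: "FF a d s t = (if s \<le> mu t + nu t + xi t
               then (4 * mu t + 3 * nu t + 2 * xi t) * a + t * d
               else (3 * mu t + 2 * nu t + xi t + s) * a + t * d)"
  unfolding FF_def ff_def hh_def by auto

lemma red_holds:
  assumes a7: "a \<ge> 7" and d0: "d > 0" and n: "n \<ge> a div 6 + 2"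
  shows "sumsetM a d (Suc n) = (\<lambda>x. a + x) ` sumsetM a d n"
proof -
  have a0: "a > 0" using a7 by simp
  have n0: "n > 0" using n by simp
  show ?thesis
  proof (intro set_eqI iffI)
    fix x assume "x \<in> (\<lambda>x. a + x) ` sumsetM a d n"
    then obtain y where x: "x = a + y" and y: "inS a d n y" using sumsetM_eq'[OF a0 n0] by auto
    obtain A T where "y = A*a + T*d" "ff T \<le> A" "n + hh T \<le> A" using y inS_iff by blast
    then have "x = (A+1)*a + T*d \<and> ff T \<le> A+1 \<and> Suc n + hh T \<le> A+1" using x by simp
    then have "inS a d (Suc n) x" using inS_iff by blast
    then show "x \<in> sumsetM a d (Suc n)" using sumsetM_eq'[OF a0, of "Suc n"] by simp
  next
    fix x assume "x \<in> sumsetM a d (Suc n)"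
    then have "inS a d (Suc n) x" using sumsetM_eq'[OF a0, of "Suc n"] by simp
    then obtain A T where xe: "x = A*a + T*d" and f: "ff T \<le> A" and h: "Suc n + hh T \<le> A"
      using inS_iff by blast
    have "\<exists>y. x = a + y \<and> inS a d n y"
    proof (cases "ff T + 1 \<le> A")
      case True
      then obtain B where B: "A = Suc B" using not0_implies_Suc by fastforce
      then have "x = a + ((A-1)*a + T*d)" using xe by simp
      moreover have "inS a d n ((A-1)*a + T*d)" unfolding inS_iff using True h by force
      ultimately show ?thesis by blast
    next
      case False
      then have AT: "A = ff T" using f by simp
      then have "mu T + nu T + xi T \<ge> a div 6 + 3" using h n ffhh[of T] by simp
      then have Ta: "a \<le> T" by (rule big)
      have "3*ff (T-a) \<le> 2*(T-a) + 11" using ffb[of "T-a"] by simp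
      moreover have "2*T \<le> 3*ff T" using ffb[of T] by simp
      ultimately have f2: "ff (T-a) + 1 \<le> ff T" using Ta a7 by linarith
      have "hh (T-a) \<le> hh T" using hhb[of "T-a"] hhb[of T] Ta a7 by linarith
      have "x = A*a + ((T-a) + a)*d" using xe Ta by simp
      also have "\<dots> = a + ((A + d - 1)*a + (T-a)*d)"
      proof -
        obtain d' where d': "d = Suc d'" using d0 not0_implies_Suc by blast
        show ?thesis unfolding d' by (simp add: algebra_simps)
      qed
      finally have "x = a + ((A + d - 1)*a + (T-a)*d)" .
      moreover have "inS a d n ((A + d - 1)*a + (T-a)*d)" unfolding inS_iff
        using f2 AT h \<open>hh (T-a) \<le> hh T\<close> d0 by (intro exI[of _ "A+d-1"] exI[of _ "T-a"]) auto
      ultimately show ?thesis by blast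
    qed
    then show "x \<in> (\<lambda>x. a + x) ` sumsetM a d n" using sumsetM_eq'[OF a0 n0] by auto
  qed
qed

lemma red_fails:
  assumes a7: "a \<ge> 7" and cop: "coprime a d"
  shows "sumsetM a d (Suc (Suc (a div 6))) \<noteq> (\<lambda>x. a + x) ` sumsetM a d (Suc (a div 6))"
proof
  assume E: "sumsetM a d (Suc (Suc (a div 6))) = (\<lambda>x. a + x) ` sumsetM a d (Suc (a div 6))"
  have a0: "a > 0" using a7 by simp
  define t where "t = 6*(a div 6) - 1"
  have t: "t < a" "mu t + nu t + xi t = a div 6 + 2" using t0[OF a7] unfolding t_def by auto
  define x where "x = FF a d (Suc (Suc (a div 6))) t"
  have "inS a d (Suc (Suc (a div 6))) x" unfolding x_def by (rule FF_in)
  then have "x \<in> sumsetM a d (Suc (Suc (a div 6)))" using sumsetM_eq'[OF a0, of "Suc (Suc (a div 6))" x d] by blast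
  then obtain y where xy: "x = a + y" and y: "y \<in> sumsetM a d (Suc (a div 6))" using E by auto
  have yi: "inS a d (Suc (a div 6)) y" using y sumsetM_eq'[OF a0, of "Suc (a div 6)" y d] by blast
  have "(a + y) mod a = (t*d) mod a" using FF_mod[of a d "Suc (Suc (a div 6))" t] xy unfolding x_def by simp
  then have "y mod a = (t*d) mod a" by simp
  then have "FF a d (Suc (a div 6)) t \<le> y" using LB[OF a7 cop t(1) yi] by simp
  moreover have "FF a d (Suc (a div 6)) t = x" unfolding x_def FF_def using t(2) ffhh[of t] by simp
  ultimately show False using xy a0 by simp
qed

theorem corollary6p4:
  fixes a d :: nat
  assumes "d > 0" and "a \<ge> 7" and "coprime a d"
  shows "(\<forall>t<a. \<forall>s\<le>a div 6 + 2.
            omega a d s t =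
              (if s \<le> mu t + nu t + xi t
               then (4 * mu t + 3 * nu t + 2 * xi t) * a + t * d
               else (3 * mu t + 2 * nu t + xi t + s) * a + t * d))
         \<and> reduction_number a d = a div 6 + 2"
proof
  show "\<forall>t<a. \<forall>s\<le>a div 6 + 2.
            omega a d s t =
              (if s \<le> mu t + nu t + xi t
               then (4 * mu t + 3 * nu t + 2 * xi t) * a + t * d
               else (3 * mu t + 2 * nu t + xi t + s) * a + t * d)"
    using omega_FF[OF assms(2,3)] FF_formula by auto
  show "reduction_number a d = a div 6 + 2"
    unfolding reduction_number_def
  proof (rule Least_equality)
    show "\<forall>n\<ge>a div 6 + 2. sumsetM a d (Suc n) = (\<lambda>x. a + x) ` sumsetM a d n"
      using red_holds[OF assms(2,1)] by blast
  next
    fix r assume R: "\<forall>n\<ge>r. sumsetM a d (Suc n) = (\<lambda>x. a + x) ` sumsetM a d n"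
    show "a div 6 + 2 \<le> r"
    proof (rule ccontr)
      assume "\<not> a div 6 + 2 \<le> r"
      then have "Suc (a div 6) \<ge> r" by simp
      then show False using R red_fails[OF assms(2,3)] by blast
    qed
  qed
qed

end
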